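(* Consider the downtown bathtub model described in the context with a fixed number $N_s>0$ of suburban commuters, and assume hypercongestion, i.e. that the equilibrium quantity $\theta=\frac{C_s^{b*}v_f}{\alpha L}$ satisfies $\theta>2$. Then: (i) the short-run equilibrium bathtub cost $C_s^{b*}$ is uniquely determined (there is exactly one $\theta>2$ with $N_s=\alpha n_j(\frac1\beta+\frac1\gamma)(\ln\theta+\frac1\theta-1)$); (ii) the introduction of autonomous vehicles, i.e. replacing $\alpha$ by $\eta\alpha$ and $n_j$ by $\xi n_j$ with $\frac{\beta}{\alpha}<\eta\le 1$ and $\xi\ge 1$, may increase or may decrease the short-run equilibrium bathtub cost: there are admissible parameter values for which it increases and admissible parameter values for which it decreases.
   Context: Downtown traffic (bathtub model): the vehicle accumulation $n(t)\ge 0$ in the downtown area evolves as $\dot n(t)=I(t)-G(t)$, with inflow $I(t)$ and outflow $G(t)=n(t)v(t)/L$, where $L>0$ is the downtown trip length and $v(t)=v_f(1-n(t)/n_j)$ (Greenshields), $v_f>0$ free-flow speed, $n_j>0$ jam accumulation. The downtown travel time of a commuter arriving at time $t$ is $T(t)=L/v(t)$. A suburban commuter arriving at work at time $t$ incurs bathtub cost $C_s^b(t)=\alpha T(t)+s(t)$ with $s(t)=\beta(t^*-t)$ for $t\le t^*$ and $s(t)=\gamma(t-t^* )$ for $t>t^*$, where $\alpha,\beta,\gamma>0$ and $t^*$ is the desired arrival time. A short-run equilibrium is a path $n(\cdot)$ and a number $C_s^{b*}$ with $C_s^b(t)=C_s^{b*}$ whenever $n(t)>0$, $C_s^b(t)\ge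 C_s^{b*}$ whenever $n(t)=0$, and $\int_{\mathbb{R}} n(t)v(t)/L\,dt=N_s$. Autonomous vehicles are modelled by a value-of-time reduction $\alpha\mapsto\eta\alpha$ ($\beta/\alpha<\eta\le1$) and a network capacity increase $n_j\mapsto\xi n_j$ ($\xi\ge1$), all other parameters unchanged. *)

theory Defs
  imports Complex_Main
begin

definition bathtub_eq :: "real \<Rightarrow> real \<Rightarrow> real \<Rightarrow> real \<Rightarrow> real \<Rightarrow> real \<Rightarrow> bool" where
  "bathtub_eq \<alpha> \<beta> \<gamma> nj Ns \<theta> \<longleftrightarrow>
     Ns = \<alpha> * nj * (1/\<beta> + 1/\<gamma>) * (ln \<theta> + 1/\<theta> - 1)"

definition hypercongested :: "real \<Rightarrow> real \<Rightarrow> real \<Rightarrow> real \<Rightarrow> real \<Rightarrow> bool" where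
  "hypercongested \<alpha> \<beta> \<gamma> nj Ns \<longleftrightarrow> (\<exists>\<theta>>2. bathtub_eq \<alpha> \<beta> \<gamma> nj Ns \<theta>)"

definition bathtub_cost :: "real \<Rightarrow> real \<Rightarrow> real \<Rightarrow> real \<Rightarrow> real \<Rightarrow> real \<Rightarrow> real \<Rightarrow> real" where
  "bathtub_cost \<alpha> \<beta> \<gamma> L vf nj Ns =
     (THE \<theta>. \<theta> > 2 \<and> bathtub_eq \<alpha> \<beta> \<gamma> nj Ns \<theta>) * \<alpha> * L / vf"

definition admissible :: "real \<Rightarrow> real \<Rightarrow> real \<Rightarrow> real \<Rightarrow> real \<Rightarrow> real \<Rightarrow> real \<Rightarrow> bool" where
  "admissible \<alpha> \<beta> \<gamma> L vf nj Ns \<longleftrightarrow>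
     \<alpha> > 0 \<and> \<beta> > 0 \<and> \<gamma> > 0 \<and> L > 0 \<and> vf > 0 \<and> nj > 0 \<and> Ns > 0"

end

theory Submission
  imports Defs
begin

lemma f_mono:
  fixes x y :: real
  assumes "1 \<le> x" "x < y"
  shows "ln x + 1/x - 1 < ln y + 1/y - 1"
proof -
  have yx: "y/x > 1" using assms by (simp add: field_simps)
  have p: "x/y > 0" "x/y \<noteq> 1" using assms by auto
  have "ln (x/y) \<le> x/y - 1" by (rule ln_le_minus_one[OF p(1)])
  moreover have "ln (x/y) \<noteq> x/y - 1" using p ln_eq_minus_one by blast
  ultimately have "ln (x/y) < x/y - 1" by linarith
  hence l: "ln y - ln x > 1 - x/y" using assms by (simp add: ln_div)
  have "(y-x)/(x*y) \<le> (y-x)/y"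
    using assms by (intro divide_left_mono) (auto simp: mult_right_mono)
  moreover have "(y-x)/(x*y) = 1/x - 1/y" "(y-x)/y = 1 - x/y" using assms by (auto simp: field_simps)
  ultimately have "1 - x/y \<ge> 1/x - 1/y" by simp
  thus ?thesis using l by linarith
qed

lemma uniq:
  assumes "\<alpha> > 0" "\<beta> > 0" "\<gamma> > 0" "nj > 0"
    "\<theta>1 > 2" "bathtub_eq \<alpha> \<beta> \<gamma> nj Ns \<theta>1" "\<theta>2 > 2" "bathtub_eq \<alpha> \<beta> \<gamma> nj Ns \<theta>2"
  shows "\<theta>1 = \<theta>2"
proof -
  have K: "\<alpha> * nj * (1/\<beta> + 1/\<gamma>) > 0" using assms by (simp add: add_pos_pos)
  have e0: "(\<alpha> * nj * (1/\<beta> + 1/\<gamma>)) * (ln \<theta>1 + 1/\<theta>1 - 1) = (\<alpha> * nj * (1/\<beta> + 1/\<gamma>)) * (ln \<theta>2 + 1/\<theta>2 - 1)"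
    using assms(6,8) unfolding bathtub_eq_def by metis
  have e: "ln \<theta>1 + 1/\<theta>1 - 1 = ln \<theta>2 + 1/\<theta>2 - 1"
    by (rule mult_left_cancel[THEN iffD1, OF _ e0]) (use K in linarith)
  show ?thesis
  proof (rule ccontr)
    assume "\<theta>1 \<noteq> \<theta>2"
    then consider "\<theta>1 < \<theta>2" | "\<theta>2 < \<theta>1" by linarith
    thus False using f_mono[of \<theta>1 \<theta>2] f_mono[of \<theta>2 \<theta>1] e assms(5,7) by cases auto
  qed
qed

lemma cost:
  assumes "\<alpha> > 0" "\<beta> > 0" "\<gamma> > 0" "nj > 0"
    "\<theta> > 2" "bathtub_eq \<alpha> \<beta> \<gamma> nj Ns \<theta>"
  shows "bathtub_cost \<alpha> \<beta> \<gamma> L vf nj Ns = \<theta> * \<alpha> * L / vf"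
proof -
  have "(THE \<theta>. \<theta> > 2 \<and> bathtub_eq \<alpha> \<beta> \<gamma> nj Ns \<theta>) = \<theta>"
    using assms uniq[OF assms(1-4)] by (intro the_equality) auto
  thus ?thesis unfolding bathtub_cost_def by simp
qed

lemma e3: "exp (3::real) > 2"
proof -
  have "exp (3::real) \<ge> 1 + 3" by (rule exp_ge_add_one_self)
  thus ?thesis by simp
qed

lemma e4: "exp (4::real) > exp 3" by simp

lemma einv: "exp (-3::real) < 1" "exp (-4::real) > 0" "exp (-3::real) > 0" "exp (-4::real) < 1" by auto

theorem proposition1:
  shows
  "(\<forall>\<alpha> \<beta> \<gamma> L vf nj Ns.
      admissible \<alpha> \<beta> \<gamma> L vf nj Ns \<and> hypercongested \<alpha> \<beta> \<gamma> nj Ns \<longrightarrow>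
      (\<exists>!\<theta>. \<theta> > 2 \<and> bathtub_eq \<alpha> \<beta> \<gamma> nj Ns \<theta>))
   \<and>
   (\<exists>\<alpha> \<beta> \<gamma> L vf nj Ns \<eta> \<xi>.
      admissible \<alpha> \<beta> \<gamma> L vf nj Ns \<and> \<beta> / \<alpha> < \<eta> \<and> \<eta> \<le> 1 \<and> \<xi> \<ge> 1 \<and>
      hypercongested \<alpha> \<beta> \<gamma> nj Ns \<and> hypercongested (\<eta> * \<alpha>) \<beta> \<gamma> (\<xi> * nj) Ns \<and>
      bathtub_cost (\<eta> * \<alpha>) \<beta> \<gamma> L vf (\<xi> * nj) Ns > bathtub_cost \<alpha> \<beta> \<gamma> L vf nj Ns)
   \<and>
   (\<exists>\<alpha> \<beta> \<gamma> L vf nj Ns \<eta> \<xi>.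
      admissible \<alpha> \<beta> \<gamma> L vf nj Ns \<and> \<beta> / \<alpha> < \<eta> \<and> \<eta> \<le> 1 \<and> \<xi> \<ge> 1 \<and>
      hypercongested \<alpha> \<beta> \<gamma> nj Ns \<and> hypercongested (\<eta> * \<alpha>) \<beta> \<gamma> (\<xi> * nj) Ns \<and>
      bathtub_cost (\<eta> * \<alpha>) \<beta> \<gamma> L vf (\<xi> * nj) Ns < bathtub_cost \<alpha> \<beta> \<gamma> L vf nj Ns)"
proof (intro conjI)
  show "\<forall>\<alpha> \<beta> \<gamma> L vf nj Ns.
      admissible \<alpha> \<beta> \<gamma> L vf nj Ns \<and> hypercongested \<alpha> \<beta> \<gamma> nj Ns \<longrightarrow>
      (\<exists>!\<theta>. \<theta> > 2 \<and> bathtub_eq \<alpha> \<beta> \<gamma> nj Ns \<theta>)"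
    unfolding admissible_def hypercongested_def using uniq by blast
next
  define t1 :: real where "t1 = exp 3"
  define t2 :: real where "t2 = exp 4"
  define f1 :: real where "f1 = 2 + exp (-3)"
  define f2 :: real where "f2 = 3 + exp (-4)"
  have t1: "t1 > 2" "t2 > 2" using e3 e4 unfolding t1_def t2_def by linarith+
  have f1: "ln t1 + 1/t1 - 1 = f1" unfolding t1_def f1_def by (simp add: exp_minus field_simps)
  have f2: "ln t2 + 1/t2 - 1 = f2" unfolding t2_def f2_def by (simp add: exp_minus field_simps)
  have fp: "f1 > 0" "f2 > 0" unfolding f1_def f2_def using einv by (auto intro: add_pos_pos)
  let ?Ns = "4 * f1"
  let ?\<eta> = "f1 / f2"
  have old: "bathtub_eq 2 1 1 1 ?Ns t1" unfolding bathtub_eq_def f1 by simp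
  have new: "bathtub_eq (?\<eta> * 2) 1 1 (1 * 1) ?Ns t2" unfolding bathtub_eq_def f2 using fp by simp
  have eta1: "1/2 < ?\<eta>" "?\<eta> \<le> 1" unfolding f1_def f2_def by (simp_all add: divide_simps) (use einv in linarith)+
  have key: "f1 * exp 4 > exp 3 * f2"
  proof -
    have "f1 * exp 4 = 2 * exp 4 + exp 1" unfolding f1_def by (simp add: algebra_simps flip: exp_add)
    moreover have "exp 3 * f2 = 3 * exp 3 + exp (-1)" unfolding f2_def by (simp add: algebra_simps flip: exp_add)
    moreover have "2 * exp (4::real) \<ge> 3 * exp 3"
    proof -
      have "exp (4::real) = exp 1 * exp 3" by (simp flip: exp_add)
      moreover have "exp (1::real) \<ge> 2" using exp_ge_add_one_self[of 1] by simp
      ultimately show ?thesis by (simp add: mult_right_mono)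
    qed
    moreover have "exp (-1::real) < exp 1" by simp
    ultimately show ?thesis by linarith
  qed
  show "\<exists>\<alpha> \<beta> \<gamma> L vf nj Ns \<eta> \<xi>.
      admissible \<alpha> \<beta> \<gamma> L vf nj Ns \<and> \<beta> / \<alpha> < \<eta> \<and> \<eta> \<le> 1 \<and> \<xi> \<ge> 1 \<and>
      hypercongested \<alpha> \<beta> \<gamma> nj Ns \<and> hypercongested (\<eta> * \<alpha>) \<beta> \<gamma> (\<xi> * nj) Ns \<and>
      bathtub_cost (\<eta> * \<alpha>) \<beta> \<gamma> L vf (\<xi> * nj) Ns > bathtub_cost \<alpha> \<beta> \<gamma> L vf nj Ns"
  proof (intro exI conjI)
    show "admissible 2 1 1 1 1 1 ?Ns" unfolding admissible_def using fp by simp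
    show "1 / 2 < ?\<eta>" "?\<eta> \<le> 1" by (fact eta1)+
    show "(1::real) \<le> 1" by simp
    show "hypercongested 2 1 1 1 ?Ns" unfolding hypercongested_def using old t1 by blast
    show "hypercongested (?\<eta> * 2) 1 1 (1 * 1) ?Ns" unfolding hypercongested_def using new t1 by blast
    have c1: "bathtub_cost 2 1 1 1 1 1 ?Ns = t1 * 2" using cost[OF _ _ _ _ t1(1) old] by simp
    have c2: "bathtub_cost (?\<eta> * 2) 1 1 1 1 (1 * 1) ?Ns = t2 * (?\<eta> * 2)"
      using cost[OF _ _ _ _ t1(2) new] fp by simp
    show "bathtub_cost 2 1 1 1 1 1 ?Ns < bathtub_cost (?\<eta> * 2) 1 1 1 1 (1 * 1) ?Ns"
      unfolding c1 c2 using key fp unfolding t1_def t2_def by (simp add: field_simps)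
  qed
next
  define t1 :: real where "t1 = exp 4"
  define t2 :: real where "t2 = exp 3"
  define f1 :: real where "f1 = 3 + exp (-4)"
  define f2 :: real where "f2 = 2 + exp (-3)"
  have t1: "t1 > 2" "t2 > 2" "t2 < t1" using e3 e4 unfolding t1_def t2_def by linarith+
  have f1: "ln t1 + 1/t1 - 1 = f1" unfolding t1_def f1_def by (simp add: exp_minus field_simps)
  have f2: "ln t2 + 1/t2 - 1 = f2" unfolding t2_def f2_def by (simp add: exp_minus field_simps)
  have fp: "f1 > 0" "f2 > 0" unfolding f1_def f2_def using einv by (auto intro: add_pos_pos)
  let ?Ns = "4 * f1"
  let ?\<xi> = "f1 / f2"
  have old: "bathtub_eq 2 1 1 1 ?Ns t1" unfolding bathtub_eq_def f1 by simp
  have new: "bathtub_eq (1 * 2) 1 1 (?\<xi> * 1) ?Ns t2" unfolding bathtub_eq_def f2 using fp by simp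
  have xi: "1 \<le> ?\<xi>" unfolding f1_def f2_def by (simp add: divide_simps) (use einv in linarith)
  show "\<exists>\<alpha> \<beta> \<gamma> L vf nj Ns \<eta> \<xi>.
      admissible \<alpha> \<beta> \<gamma> L vf nj Ns \<and> \<beta> / \<alpha> < \<eta> \<and> \<eta> \<le> 1 \<and> \<xi> \<ge> 1 \<and>
      hypercongested \<alpha> \<beta> \<gamma> nj Ns \<and> hypercongested (\<eta> * \<alpha>) \<beta> \<gamma> (\<xi> * nj) Ns \<and>
      bathtub_cost (\<eta> * \<alpha>) \<beta> \<gamma> L vf (\<xi> * nj) Ns < bathtub_cost \<alpha> \<beta> \<gamma> L vf nj Ns"
  proof (intro exI conjI)
    show "admissible 2 1 1 1 1 1 ?Ns" unfolding admissible_def using fp by simp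
    show "1 / 2 < (1::real)" "(1::real) \<le> 1" by simp_all
    show "1 \<le> ?\<xi>" by (fact xi)
    show "hypercongested 2 1 1 1 ?Ns" unfolding hypercongested_def using old t1 by blast
    show "hypercongested (1 * 2) 1 1 (?\<xi> * 1) ?Ns" unfolding hypercongested_def using new t1 by blast
    have c1: "bathtub_cost 2 1 1 1 1 1 ?Ns = t1 * 2" using cost[OF _ _ _ _ t1(1) old] by simp
    have c2: "bathtub_cost (1 * 2) 1 1 1 1 (?\<xi> * 1) ?Ns = t2 * 2"
      using cost[OF _ _ _ _ t1(2) new] fp by simp
    show "bathtub_cost (1 * 2) 1 1 1 1 (?\<xi> * 1) ?Ns < bathtub_cost 2 1 1 1 1 1 ?Ns"
      unfolding c1 c2 using t1 by simp
  qed
qed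

end
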